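(* Let $0\le\alpha\le\beta\le\pi/2$ and $P_1,P_2>0$, and define $\mathcal R(\theta)$ as in the context. Then for every $\theta\in\mathbb R$ there exists $\theta'\in[\alpha,\beta]$ with $\mathcal R(\theta)\subseteq\mathcal R(\theta')$. In particular, for a two-hop MAC with two relay nodes, to obtain the first outer bound it suffices to take $\theta\in[\alpha,\beta]$.
   Context: Let $\mathcal C(x)=\frac12\log_2(1+x)$, $\phi_1(\theta)=P_1\cos^2(\theta-\alpha)$, $\phi_2(\theta)=P_2\cos^2(\theta-\beta)$, $\phi=\phi_1+\phi_2$, and $\mathcal R(\theta)=\{(R_1,R_2)\ge0:R_1\le\mathcal C(\phi_1(\theta)),R_2\le\mathcal C(\phi_2(\theta)),R_1+R_2\le\mathcal C(\phi(\theta))\}$. In a two-user two-hop MAC with two relays (source-to-relay channel vectors $\mathbf h_{01},\mathbf h_{02}\in\mathbb R^2$ with positive entries, source powers $P_{S_i}$, relay gains $\mathbf B$, relay-to-destination vector $\mathbf h_1$), writing $\mathbf h_{0i}/\|\mathbf h_{0i}\|$ and $\mathbf B\mathbf h_1/\|\mathbf B\mathbf h_1\|$ as $(\cos\alpha,\sin\alpha)$, $(\cos\beta,\sin\beta)$, $(\cos\theta,\sin\theta)$ and $P_i=\|\mathbf h_{0i}\|^2P_{S_i}$, the first outer-bound rate set (destination noise omitted) of the AF scheme $\mathbf B$ equals $\mathcal R(\theta)$. *)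

theory Defs
  imports Complex_Main
begin

definition capC :: "real \<Rightarrow> real" where
  "capC x = (1/2) * log 2 (1 + x)"

definition phi1 :: "real \<Rightarrow> real \<Rightarrow> real \<Rightarrow> real" where
  "phi1 P1 \<alpha> \<theta> = P1 * (cos (\<theta> - \<alpha>))^2"

definition phi2 :: "real \<Rightarrow> real \<Rightarrow> real \<Rightarrow> real" where
  "phi2 P2 \<beta> \<theta> = P2 * (cos (\<theta> - \<beta>))^2"

definition rate_region :: "real \<Rightarrow> real \<Rightarrow> real \<Rightarrow> real \<Rightarrow> real \<Rightarrow> (real \<times> real) set" where
  "rate_region P1 P2 \<alpha> \<beta> \<theta> =
     {(R1, R2). 0 \<le> R1 \<and> 0 \<le> R2 \<and>
        R1 \<le> capC (phi1 P1 \<alpha> \<theta>) \<and>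
        R2 \<le> capC (phi2 P2 \<beta> \<theta>) \<and>
        R1 + R2 \<le> capC (phi1 P1 \<alpha> \<theta> + phi2 P2 \<beta> \<theta>)}"

end

theory Submission
  imports Defs
begin

lemma capC_mono: "0 \<le> x \<Longrightarrow> x \<le> y \<Longrightarrow> capC x \<le> capC y"
  unfolding capC_def by simp

lemma cos_sq_period: "cos (x + of_int k * pi) ^ 2 = cos x ^ 2"
proof -
  have s: "sin (of_int k * pi) = 0" using sin_zero_iff_int2 by blast
  hence c: "cos (of_int k * pi) ^ 2 = 1" using sin_cos_squared_add[of "of_int k * pi"] by simp
  show ?thesis by (simp add: cos_add s power_mult_distrib c)
qed

lemma dom:
  assumes "P1 > 0" "P2 > 0"
    and "phi1 P1 a t \<le> phi1 P1 a t'" "phi2 P2 b t \<le> phi2 P2 b t'"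
  shows "rate_region P1 P2 a b t \<subseteq> rate_region P1 P2 a b t'"
proof -
  have n1: "0 \<le> phi1 P1 a t" using assms unfolding phi1_def by simp
  have n2: "0 \<le> phi2 P2 b t" using assms unfolding phi2_def by simp
  have "capC (phi1 P1 a t) \<le> capC (phi1 P1 a t')" by (rule capC_mono[OF n1 assms(3)])
  moreover have "capC (phi2 P2 b t) \<le> capC (phi2 P2 b t')" by (rule capC_mono[OF n2 assms(4)])
  moreover have "capC (phi1 P1 a t + phi2 P2 b t) \<le> capC (phi1 P1 a t' + phi2 P2 b t')"
    using n1 n2 assms by (intro capC_mono) auto
  ultimately show ?thesis unfolding rate_region_def by auto
qed

lemma cos_sq_le1: "cos (x::real) ^ 2 \<le> 1"
  using abs_cos_le_one[of x] by (simp add: abs_square_le_1)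

theorem lemma3:
  fixes \<alpha> \<beta> P1 P2 :: real
  assumes "0 \<le> \<alpha>" "\<alpha> \<le> \<beta>" "\<beta> \<le> pi / 2"
    and "P1 > 0" "P2 > 0"
  shows "\<forall>\<theta>::real. \<exists>\<theta>'\<in>{\<alpha>..\<beta>}.
           rate_region P1 P2 \<alpha> \<beta> \<theta> \<subseteq> rate_region P1 P2 \<alpha> \<beta> \<theta>'"
proof
  fix \<theta> :: real
  define k where "k = floor ((\<theta> - \<alpha>) / pi)"
  define t where "t = \<theta> - of_int k * pi"
  have k1: "of_int k \<le> (\<theta> - \<alpha>) / pi" "(\<theta> - \<alpha>) / pi < of_int k + 1"
    unfolding k_def by linarith+
  have "of_int k * pi \<le> \<theta> - \<alpha>" using k1(1) pi_gt_zero by (simp add: le_divide_eq)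
  moreover have "\<theta> - \<alpha> < (of_int k + 1) * pi" using k1(2) pi_gt_zero by (simp add: divide_less_eq)
  ultimately have t1: "\<alpha> \<le> t" "t < \<alpha> + pi" unfolding t_def by (auto simp: algebra_simps)
  have p1: "phi1 P1 \<alpha> \<theta> = phi1 P1 \<alpha> t"
    unfolding phi1_def t_def using cos_sq_period[of "\<theta> - of_int k * pi - \<alpha>" k]
    by (simp add: algebra_simps)
  have p2: "phi2 P2 \<beta> \<theta> = phi2 P2 \<beta> t"
    unfolding phi2_def t_def using cos_sq_period[of "\<theta> - of_int k * pi - \<beta>" k]
    by (simp add: algebra_simps)
  define d where "d = \<beta> - \<alpha>"
  define s where "s = t - \<beta>"
  have d: "0 \<le> d" "d \<le> pi/2" using assms unfolding d_def by auto
  show "\<exists>\<theta>'\<in>{\<alpha>..\<beta>}. rate_region P1 P2 \<alpha> \<beta> \<theta> \<subseteq> rate_region P1 P2 \<alpha> \<beta> \<theta>'"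
  proof (cases "t \<le> \<beta>")
    case True
    thus ?thesis using t1 p1 p2 assms by (intro bexI[of _ t] dom) auto
  next
    case False
    hence s0: "0 < s" "s < pi - d" using t1 unfolding s_def d_def by auto
    show ?thesis
    proof (cases "s < d")
      case True
      have cs: "cos (\<beta> - s - \<beta>) = cos (t - \<beta>)" unfolding s_def using cos_minus[of "t - \<beta>"] by simp
      have e1: "\<beta> - s - \<alpha> = d - s" "t - \<alpha> = d + s" unfolding s_def d_def by auto
      have "0 \<le> sin d" "0 \<le> cos d" "0 \<le> sin s" "0 \<le> cos s"
        using d s0 True by (auto intro!: sin_ge_zero cos_ge_zero)
      hence "0 \<le> 4 * (cos d * cos s * sin d * sin s)" by simp
      also have "4 * (cos d * cos s * sin d * sin s) = cos (d - s) ^ 2 - cos (d + s) ^ 2"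
        by (simp add: cos_diff cos_add power2_eq_square algebra_simps)
      finally have "cos (d + s) ^ 2 \<le> cos (d - s) ^ 2" by simp
      hence "phi1 P1 \<alpha> t \<le> phi1 P1 \<alpha> (\<beta> - s)"
        unfolding phi1_def e1 using assms by simp
      moreover have "phi2 P2 \<beta> t = phi2 P2 \<beta> (\<beta> - s)" unfolding phi2_def using cs by simp
      ultimately show ?thesis using p1 p2 assms s0 True unfolding d_def
        by (intro bexI[of _ "\<beta> - s"] dom) auto
    next
      case False
      have "cos s ^ 2 \<le> cos d ^ 2"
      proof (cases "s \<le> pi/2")
        case True
        hence "cos s \<le> cos d" "0 \<le> cos s" using False d s0
          by (auto intro!: cos_monotone_0_pi_le cos_ge_zero)
        thus ?thesis by (simp add: power_mono)
      next
        case ns: False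
        have "cos (pi - s) \<le> cos d" using ns d s0
          by (intro cos_monotone_0_pi_le) auto
        moreover have "0 \<le> cos (pi - s)" using ns d s0
          by (intro cos_ge_zero) auto
        ultimately have "cos (pi - s) ^ 2 \<le> cos d ^ 2" by (rule power_mono)
        moreover have "cos (pi - s) ^ 2 = cos s ^ 2" by (simp only: cos_pi_minus power2_minus)
        ultimately show ?thesis by simp
      qed
      hence "phi2 P2 \<beta> t \<le> phi2 P2 \<beta> \<alpha>"
        unfolding phi2_def s_def d_def using assms cos_minus[of "\<alpha> - \<beta>"] by simp
      moreover have "phi1 P1 \<alpha> t \<le> phi1 P1 \<alpha> \<alpha>"
        unfolding phi1_def using assms cos_sq_le1 by simp
      ultimately show ?thesis using p1 p2 assms by (intro bexI[of _ \<alpha>] dom) auto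
    qed
  qed
qed

end
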